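(* For every $p\ge1$ and $C>0$, the map $d_{\mathbb G,A}$ is a pseudometric on $\mathbb G$ (it is well defined on equality classes, $d_{\mathbb G,A}(G,G)=0$, it is symmetric and satisfies the triangle inequality). If $d_{\mathcal X}$ and $d_{\mathcal Y}$ are metrics, then $d_{\mathbb G,A}$ is a metric on $\mathbb G$.
   Context: Let $(\mathcal X,d_{\mathcal X})$ and $(\mathcal Y,d_{\mathcal Y})$ be pseudometric spaces (symmetric, satisfying the triangle inequality, $d(z,z)=0$), with a distinguished element $y_0\in\mathcal Y$ meaning "no edge". For $n\in\mathbb N_0$ write $[n]=\{1,\dots,n\}$ ($[0]=\emptyset$) and $S_n$ for the set of permutations of $[n]$. An attributed simple graph is a triple $([n],v,e)$ with $v:[n]\to\mathcal X$ and $e:[n]^2\to\mathcal Y$ symmetric ($e(i,i')=e(i',i)$) with $e(i,i)=y_0$ for all $i$; write $v_i=v(i)$, $e_{ii'}=e(i,i')$. Two graphs $([n],v,e)$, $([n],w,f)$ are regarded as equal if there is $\pi\in S_n$ with $v_i=w_{\pi(i)}$ and $e_{ii'}=f_{\pi(i)\pi(i')}$ for all $i,i'\in[n]$; $\mathbb G$ denotes the set of such graphs. GTT distance: for $p\ge1$, $C>0$ and $([m],v,e),([n],w,f)\in\mathbb G$ with $m\le n$, $$d_{\mathbb G,A}(([m],v,e),([n],w,f))=\min_{I\subset[m],\,\pi\in S_n}\Big[(m+n-2|I|)C^p+\sum_{i\in I}d_{\mathcal X}(v_i,w_{\pi(i)})^p+\tfrac12\sum_{(i,i')\in I^2}d_{\mathcal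 Y}(e_{ii'},f_{\pi(i)\pi(i')})^p+\tfrac12\sum_{(i,i')\in[m]^2\setminus I^2}d_{\mathcal Y}(e_{ii'},y_0)^p+\tfrac12\sum_{(j,j')\in[n]^2\setminus\pi(I)^2}d_{\mathcal Y}(y_0,f_{jj'})^p\Big]^{1/p},$$ and for $m>n$ it is defined by swapping the two arguments. *)

theory Defs
  imports Complex_Main "HOL-Combinatorics.Permutations"
begin

definition pseudometric :: "('a \<Rightarrow> 'a \<Rightarrow> real) \<Rightarrow> bool" where
  "pseudometric d \<longleftrightarrow> (\<forall>z. d z z = 0) \<and> (\<forall>x y. d x y = d y x)
     \<and> (\<forall>x y z. d x z \<le> d x y + d y z)"

definition is_metric :: "('a \<Rightarrow> 'a \<Rightarrow> real) \<Rightarrow> bool" where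
  "is_metric d \<longleftrightarrow> pseudometric d \<and> (\<forall>x y. d x y = 0 \<longrightarrow> x = y)"

text \<open>An attributed graph ([n], v, e) is represented by the triple (n, v, e);
  only the values of v on {1..n} and of e on {1..n}^2 matter.\<close>
type_synonym ('x, 'y) agraph = "nat \<times> (nat \<Rightarrow> 'x) \<times> (nat \<Rightarrow> nat \<Rightarrow> 'y)"

definition is_agraph :: "'y \<Rightarrow> ('x, 'y) agraph \<Rightarrow> bool" where
  "is_agraph y0 G \<longleftrightarrow> (case G of (n, v, e) \<Rightarrow>
     (\<forall>i\<in>{1..n}. \<forall>i'\<in>{1..n}. e i i' = e i' i) \<and> (\<forall>i\<in>{1..n}. e i i = y0))"

definition graph_eq :: "('x, 'y) agraph \<Rightarrow> ('x, 'y) agraph \<Rightarrow> bool" where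
  "graph_eq G H \<longleftrightarrow> (case G of (m, v, e) \<Rightarrow> case H of (n, w, f) \<Rightarrow>
     m = n \<and> (\<exists>\<pi>. \<pi> permutes {1..n} \<and>
        (\<forall>i\<in>{1..n}. v i = w (\<pi> i)) \<and>
        (\<forall>i\<in>{1..n}. \<forall>i'\<in>{1..n}. e i i' = f (\<pi> i) (\<pi> i'))))"

definition gtt_cost ::
  "real \<Rightarrow> real \<Rightarrow> ('x \<Rightarrow> 'x \<Rightarrow> real) \<Rightarrow> ('y \<Rightarrow> 'y \<Rightarrow> real) \<Rightarrow> 'y \<Rightarrow>
   ('x, 'y) agraph \<Rightarrow> ('x, 'y) agraph \<Rightarrow> nat set \<Rightarrow> (nat \<Rightarrow> nat) \<Rightarrow> real" where
  "gtt_cost p C dX dY y0 G H I \<pi> = (case G of (m, v, e) \<Rightarrow> case H of (n, w, f) \<Rightarrow>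
      (real m + real n - 2 * real (card I)) * C powr p
    + (\<Sum>i\<in>I. dX (v i) (w (\<pi> i)) powr p)
    + 1/2 * (\<Sum>(i, i')\<in>I \<times> I. dY (e i i') (f (\<pi> i) (\<pi> i')) powr p)
    + 1/2 * (\<Sum>(i, i')\<in>({1..m} \<times> {1..m}) - I \<times> I. dY (e i i') y0 powr p)
    + 1/2 * (\<Sum>(j, j')\<in>({1..n} \<times> {1..n}) - (\<pi> ` I) \<times> (\<pi> ` I). dY y0 (f j j') powr p))"

definition gtt_dist_le ::
  "real \<Rightarrow> real \<Rightarrow> ('x \<Rightarrow> 'x \<Rightarrow> real) \<Rightarrow> ('y \<Rightarrow> 'y \<Rightarrow> real) \<Rightarrow> 'y \<Rightarrow>
   ('x, 'y) agraph \<Rightarrow> ('x, 'y) agraph \<Rightarrow> real" where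
  "gtt_dist_le p C dX dY y0 G H =
     (Min {gtt_cost p C dX dY y0 G H I \<pi> | I \<pi>. I \<subseteq> {1..fst G} \<and> \<pi> permutes {1..fst H}})
       powr (1 / p)"

definition gtt_dist ::
  "real \<Rightarrow> real \<Rightarrow> ('x \<Rightarrow> 'x \<Rightarrow> real) \<Rightarrow> ('y \<Rightarrow> 'y \<Rightarrow> real) \<Rightarrow> 'y \<Rightarrow>
   ('x, 'y) agraph \<Rightarrow> ('x, 'y) agraph \<Rightarrow> real" where
  "gtt_dist p C dX dY y0 G H =
     (if fst G \<le> fst H then gtt_dist_le p C dX dY y0 G H else gtt_dist_le p C dX dY y0 H G)"

end

theory Submission
  imports Defs "HOL-Analysis.Analysis"
begin


lemma conv_powr:
  fixes a b t p :: real
  assumes "a \<ge> 0" "b \<ge> 0" "0 \<le> t" "t \<le> 1" "p \<ge> 1"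
  shows "((1-t)*a + t*b) powr p \<le> (1-t) * a powr p + t * b powr p"
proof -
  have tp: "s powr p \<le> s" if "0 \<le> s" "s \<le> 1" for s :: real
  proof -
    have "s powr p \<le> s powr 1" using powr_mono'[of 1 p s] that assms by simp
    thus ?thesis using that by simp
  qed
  show ?thesis
  proof (cases "a > 0 \<and> b > 0")
    case True
    from convex_onD[OF powr_convex[OF assms(5)], of t a b] True assms show ?thesis by simp
  next
    case False
    then have "a = 0 \<or> b = 0" using assms by linarith
    then show ?thesis
    proof
      assume a: "a = 0"
      have "(t*b) powr p = t powr p * b powr p" using assms by (simp add: powr_mult)
      also have "\<dots> \<le> t * b powr p" using tp[of t] assms by (intro mult_right_mono) auto
      finally show ?thesis using a assms by simp
    next
      assume b: "b = 0"
      have "((1-t)*a) powr p = (1-t) powr p * a powr p" using assms by (simp add: powr_mult)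
      also have "\<dots> \<le> (1-t) * a powr p" using tp[of "1-t"] assms by (intro mult_right_mono) auto
      finally show ?thesis using b assms by simp
    qed
  qed
qed

lemma sum_powr_zero:
  fixes x :: "'i \<Rightarrow> real"
  assumes "finite A" "\<And>i. i \<in> A \<Longrightarrow> x i \<ge> 0" "(\<Sum>i\<in>A. x i powr p) = 0" "i \<in> A"
  shows "x i = 0"
proof -
  have "x i powr p = 0" using assms sum_nonneg_eq_0_iff[of A "\<lambda>i. x i powr p"] by auto
  thus ?thesis by simp
qed

lemma minkowski:
  fixes x y :: "'i \<Rightarrow> real" and p :: real
  assumes fin: "finite A" and p: "p \<ge> 1" and x: "\<And>i. i \<in> A \<Longrightarrow> x i \<ge> 0" and y: "\<And>i. i \<in> A \<Longrightarrow> y i \<ge> 0"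
  shows "(\<Sum>i\<in>A. (x i + y i) powr p) powr (1/p)
     \<le> (\<Sum>i\<in>A. x i powr p) powr (1/p) + (\<Sum>i\<in>A. y i powr p) powr (1/p)"
proof -
  define SX where "SX = (\<Sum>i\<in>A. x i powr p)"
  define SY where "SY = (\<Sum>i\<in>A. y i powr p)"
  define X where "X = SX powr (1/p)"
  define Y where "Y = SY powr (1/p)"
  have SX0: "SX \<ge> 0" unfolding SX_def by (intro sum_nonneg) auto
  have SY0: "SY \<ge> 0" unfolding SY_def by (intro sum_nonneg) auto
  have XP: "X powr p = SX" unfolding X_def using SX0 p by (simp add: powr_powr)
  have YP: "Y powr p = SY" unfolding Y_def using SY0 p by (simp add: powr_powr)
  show ?thesis
  proof (cases "SX = 0")
    case True
    then have "x i = 0" if "i \<in> A" for i using sum_powr_zero[OF fin x] that SX_def by auto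
    then show ?thesis using True unfolding SX_def SY_def by simp
  next
    case SXn: False
    show ?thesis
    proof (cases "SY = 0")
      case True
      then have "y i = 0" if "i \<in> A" for i using sum_powr_zero[OF fin y] that SY_def by auto
      then show ?thesis using True unfolding SX_def SY_def by simp
    next
      case SYn: False
      have Xp: "X > 0" using SXn SX0 X_def by simp
      have Yp: "Y > 0" using SYn SY0 Y_def by simp
      define t where "t = Y / (X+Y)"
      have t0: "0 \<le> t" "t \<le> 1" using Xp Yp by (auto simp: t_def)
      have key: "((x i + y i)/(X+Y)) powr p \<le> (1-t) * (x i / X) powr p + t * (y i / Y) powr p"
        if "i \<in> A" for i
      proof -
        have 1: "1 - t = X/(X+Y)" using Xp Yp by (simp add: t_def field_simps)
        have "(1-t)*(x i/X) = x i/(X+Y)" using Xp Yp by (simp add: 1)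
        moreover have "t*(y i/Y) = y i/(X+Y)" using Xp Yp by (simp add: t_def)
        ultimately have "(1-t)*(x i/X) + t*(y i/Y) = x i/(X+Y) + y i/(X+Y)" by simp
        then have "(x i + y i)/(X+Y) = (1-t)*(x i/X) + t*(y i/Y)"
          by (simp add: add_divide_distrib)
        then show ?thesis using conv_powr[of "x i/X" "y i/Y" t p] x y that Xp Yp t0 p by simp
      qed
      have "(\<Sum>i\<in>A. ((x i + y i)/(X+Y)) powr p)
          \<le> (\<Sum>i\<in>A. (1-t) * (x i / X) powr p + t * (y i / Y) powr p)"
        by (rule sum_mono) (rule key)
      also have "\<dots> = (1-t) * (\<Sum>i\<in>A. x i powr p) / X powr p + t * (\<Sum>i\<in>A. y i powr p) / Y powr p"
        using Xp Yp x y by (simp add: sum.distrib sum_distrib_left sum_divide_distrib powr_divide)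
      also have "\<dots> = 1" using XP YP SXn SYn unfolding SX_def SY_def by simp
      finally have s1: "(\<Sum>i\<in>A. ((x i + y i)/(X+Y)) powr p) \<le> 1" .
      have "(\<Sum>i\<in>A. ((x i + y i)/(X+Y)) powr p) = (\<Sum>i\<in>A. (x i + y i) powr p) / (X+Y) powr p"
        using Xp Yp x y by (simp add: sum_divide_distrib powr_divide)
      with s1 have "(\<Sum>i\<in>A. (x i + y i) powr p) \<le> (X+Y) powr p"
        using Xp Yp by (simp add: divide_le_eq)
      then have "(\<Sum>i\<in>A. (x i + y i) powr p) powr (1/p) \<le> ((X+Y) powr p) powr (1/p)"
        using p x y by (intro powr_mono2) (auto intro: sum_nonneg)
      also have "\<dots> = X + Y" using Xp Yp p by (simp add: powr_powr)
      finally show ?thesis unfolding X_def Y_def SX_def SY_def .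
    qed
  qed
qed

lemma superadd_powr:
  fixes a b p :: real
  assumes "a \<ge> 0" "b \<ge> 0" "p \<ge> 1"
  shows "a powr p + b powr p \<le> (a+b) powr p"
proof (cases "a + b = 0")
  case True then have "a = 0" "b = 0" using assms by linarith+
  then show ?thesis by simp
next
  case False
  then have s: "a + b > 0" using assms by simp
  have tp: "s powr p \<le> s" if "0 \<le> s" "s \<le> 1" for s :: real
  proof -
    have "s powr p \<le> s powr 1" using powr_mono'[of 1 p s] that assms by simp
    thus ?thesis using that by simp
  qed
  have "a powr p = (a/(a+b)) powr p * (a+b) powr p" using s assms by (simp add: powr_divide)
  also have "\<dots> \<le> (a/(a+b)) * (a+b) powr p" using tp[of "a/(a+b)"] s assms
    by (intro mult_right_mono) auto
  finally have 1: "a powr p \<le> (a/(a+b)) * (a+b) powr p" .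
  have "b powr p = (b/(a+b)) powr p * (a+b) powr p" using s assms by (simp add: powr_divide)
  also have "\<dots> \<le> (b/(a+b)) * (a+b) powr p" using tp[of "b/(a+b)"] s assms
    by (intro mult_right_mono) auto
  finally have 2: "b powr p \<le> (b/(a+b)) * (a+b) powr p" .
  have "(a/(a+b)) * (a+b) powr p + (b/(a+b)) * (a+b) powr p = (a/(a+b) + b/(a+b)) * (a+b) powr p"
    by (simp add: algebra_simps)
  also have "\<dots> = (a+b) powr p" using s by (simp add: add_divide_distrib[symmetric])
  finally have "(a/(a+b)) * (a+b) powr p + (b/(a+b)) * (a+b) powr p = (a+b) powr p" .
  with 1 2 show ?thesis by linarith
qed



lemma perm_extend:
  fixes f :: "'a \<Rightarrow> 'a"
  assumes "finite S" "A \<subseteq> S" "inj_on f A" "f ` A \<subseteq> S"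
  shows "\<exists>\<pi>. \<pi> permutes S \<and> (\<forall>x\<in>A. \<pi> x = f x)"
proof -
  have fA: "finite A" using assms finite_subset by blast
  have "card (S - A) = card (S - f ` A)"
    using assms fA by (simp add: card_Diff_subset card_image)
  then obtain g where g: "bij_betw g (S - A) (S - f ` A)"
    using assms by (metis finite_Diff finite_same_card_bij)
  define \<pi> where "\<pi> x = (if x \<in> A then f x else if x \<in> S then g x else x)" for x
  have "bij_betw \<pi> (A \<union> (S - A)) (f ` A \<union> (S - f ` A))"
  proof (rule bij_betw_combine)
    show "bij_betw \<pi> A (f ` A)" unfolding \<pi>_def using assms(3)
      by (simp add: bij_betw_def inj_on_def)
    show "bij_betw \<pi> (S - A) (S - f ` A)"
      using g unfolding \<pi>_def by (rule bij_betw_cong[THEN iffD1, rotated]) auto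
  qed auto
  moreover have "A \<union> (S - A) = S" "f ` A \<union> (S - f ` A) = S" using assms by auto
  ultimately have b: "bij_betw \<pi> S S" by simp
  have "\<pi> permutes S" by (rule bij_imp_permutes[OF b]) (use assms in \<open>auto simp: \<pi>_def\<close>)
  then show ?thesis unfolding \<pi>_def by auto
qed

lemma sum_if_const:
  fixes c :: real
  assumes "finite A"
  shows "(\<Sum>s\<in>A. if P s then c else 0) = real (card {s\<in>A. P s}) * c"
  using assms by (simp add: sum.inter_filter[symmetric])

lemma perm_pair_bij:
  assumes "\<sigma> permutes A"
  shows "bij_betw (map_prod \<sigma> \<sigma>) (A \<times> A - J \<times> J) (A \<times> A - \<sigma> ` J \<times> \<sigma> ` J)"
proof (rule bij_betw_imageI)
  have inj: "inj \<sigma>" using permutes_inj[OF assms] .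
  have mem: "\<And>x. \<sigma> x \<in> A \<longleftrightarrow> x \<in> A" using permutes_in_image[OF assms] .
  have memJ: "\<And>x. \<sigma> x \<in> \<sigma> ` J \<longleftrightarrow> x \<in> J" using inj by (simp add: inj_image_mem_iff)
  show "inj_on (map_prod \<sigma> \<sigma>) (A \<times> A - J \<times> J)"
    using inj unfolding inj_on_def inj_def by auto
  show "map_prod \<sigma> \<sigma> ` (A \<times> A - J \<times> J) = A \<times> A - \<sigma> ` J \<times> \<sigma> ` J"
  proof
    show "map_prod \<sigma> \<sigma> ` (A \<times> A - J \<times> J) \<subseteq> A \<times> A - \<sigma> ` J \<times> \<sigma> ` J"
    proof
      fix q assume "q \<in> map_prod \<sigma> \<sigma> ` (A \<times> A - J \<times> J)"
      then obtain a b where "(a,b) \<in> A \<times> A - J \<times> J" "q = (\<sigma> a, \<sigma> b)" by auto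
      then show "q \<in> A \<times> A - \<sigma> ` J \<times> \<sigma> ` J" using mem memJ by simp
    qed
    show "A \<times> A - \<sigma> ` J \<times> \<sigma> ` J \<subseteq> map_prod \<sigma> \<sigma> ` (A \<times> A - J \<times> J)"
    proof
      fix q assume q: "q \<in> A \<times> A - \<sigma> ` J \<times> \<sigma> ` J"
      obtain a b where qab: "q = (a, b)" by force
      have ia: "\<sigma> (inv \<sigma> a) = a" "\<sigma> (inv \<sigma> b) = b" using permutes_inverses[OF assms] by auto
      have "(inv \<sigma> a, inv \<sigma> b) \<in> A \<times> A - J \<times> J"
        using q qab mem[of "inv \<sigma> a"] mem[of "inv \<sigma> b"] memJ[of "inv \<sigma> a"] memJ[of "inv \<sigma> b"]
        unfolding ia by simp
      moreover have "map_prod \<sigma> \<sigma> (inv \<sigma> a, inv \<sigma> b) = q"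
        using qab ia by simp
      ultimately show "q \<in> map_prod \<sigma> \<sigma> ` (A \<times> A - J \<times> J)" by (metis image_eqI)
    qed
  qed
qed

locale gtt =
  fixes p C :: real and dX :: "'x \<Rightarrow> 'x \<Rightarrow> real" and dY :: "'y \<Rightarrow> 'y \<Rightarrow> real" and y0 :: 'y
  assumes p1: "p \<ge> 1" and Cpos: "C > 0" and pmX: "pseudometric dX" and pmY: "pseudometric dY"
begin

lemma dX_refl[simp]: "dX z z = 0" and dX_sym: "dX x y = dX y x" and dX_tri: "dX x z \<le> dX x y + dX y z"
  using pmX unfolding pseudometric_def by auto
lemma dY_refl[simp]: "dY z z = 0" and dY_sym: "dY x y = dY y x" and dY_tri: "dY x z \<le> dY x y + dY y z"
  using pmY unfolding pseudometric_def by auto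
lemma dX_nn[simp]: "dX x y \<ge> 0" using dX_tri[where x=x and y=y and z=x] dX_sym[of x y] dX_refl[of x] by linarith
lemma dY_nn[simp]: "dY x y \<ge> 0" using dY_tri[where x=x and y=y and z=x] dY_sym[of x y] dY_refl[of x] by linarith
lemma p_pos: "p > 0" using p1 by simp
lemma zero_powr_p[simp]: "(0::real) powr p = 0" by simp

definition ev :: "nat \<Rightarrow> (nat \<Rightarrow> nat \<Rightarrow> 'y) \<Rightarrow> nat \<Rightarrow> nat \<Rightarrow> 'y" where
  "ev m e s s' = (if s \<in> {1..m} \<and> s' \<in> {1..m} then e s s' else y0)"

definition vq :: "('x, 'y) agraph \<Rightarrow> ('x, 'y) agraph \<Rightarrow> (nat \<Rightarrow> nat) \<Rightarrow> nat set \<Rightarrow> nat \<Rightarrow> real" where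
  "vq G H \<sigma> J s = (case G of (m, v, e) \<Rightarrow> case H of (n, w, f) \<Rightarrow>
     if s \<in> J then dX (v s) (w (\<sigma> s)) powr p
     else (if s \<in> {1..m} then C powr p else 0) + (if \<sigma> s \<in> {1..n} then C powr p else 0))"

definition eqq :: "('x, 'y) agraph \<Rightarrow> ('x, 'y) agraph \<Rightarrow> (nat \<Rightarrow> nat) \<Rightarrow> nat set \<Rightarrow> nat \<times> nat \<Rightarrow> real" where
  "eqq G H \<sigma> J q = (case G of (m, v, e) \<Rightarrow> case H of (n, w, f) \<Rightarrow>
     if fst q \<in> J \<and> snd q \<in> J then dY (e (fst q) (snd q)) (f (\<sigma> (fst q)) (\<sigma> (snd q))) powr p
     else dY (ev m e (fst q) (snd q)) y0 powr p + dY y0 (ev n f (\<sigma> (fst q)) (\<sigma> (snd q))) powr p)"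

definition pc :: "nat \<Rightarrow> ('x, 'y) agraph \<Rightarrow> ('x, 'y) agraph \<Rightarrow> (nat \<Rightarrow> nat) \<Rightarrow> nat set \<Rightarrow> real" where
  "pc N G H \<sigma> J = (\<Sum>s\<in>{1..N}. vq G H \<sigma> J s) + 1/2 * (\<Sum>q\<in>{1..N}\<times>{1..N}. eqq G H \<sigma> J q)"

definition valid :: "nat \<Rightarrow> ('x, 'y) agraph \<Rightarrow> ('x, 'y) agraph \<Rightarrow> (nat \<Rightarrow> nat) \<Rightarrow> nat set \<Rightarrow> bool" where
  "valid N G H \<sigma> J \<longleftrightarrow> \<sigma> permutes {1..N} \<and> J \<subseteq> {s\<in>{1..fst G}. \<sigma> s \<in> {1..fst H}}"

definition TT :: "nat \<Rightarrow> ('x, 'y) agraph \<Rightarrow> ('x, 'y) agraph \<Rightarrow> real set" where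
  "TT N G H = {pc N G H \<sigma> J | \<sigma> J. valid N G H \<sigma> J}"

lemma vq_nn: "vq G H \<sigma> J s \<ge> 0"
  by (auto simp: vq_def split: prod.splits)
lemma eqq_nn: "eqq G H \<sigma> J q \<ge> 0"
  by (auto simp: eqq_def split: prod.splits intro: add_nonneg_nonneg)
lemma pc_nn: "pc N G H \<sigma> J \<ge> 0"
  unfolding pc_def by (intro add_nonneg_nonneg mult_nonneg_nonneg sum_nonneg vq_nn eqq_nn) auto


lemma card_Sn:
  assumes "\<sigma> permutes {1..N}" "n \<le> N"
  shows "card {s\<in>{1..N}. \<sigma> s \<in> {1..n}} = n"
proof -
  have "{s\<in>{1..N}. \<sigma> s \<in> {1..n}} = inv \<sigma> ` {1..n}"
  proof
    show "{s\<in>{1..N}. \<sigma> s \<in> {1..n}} \<subseteq> inv \<sigma> ` {1..n}"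
      using permutes_inverses[OF assms(1)] by (auto intro: rev_image_eqI)
    show "inv \<sigma> ` {1..n} \<subseteq> {s\<in>{1..N}. \<sigma> s \<in> {1..n}}"
    proof
      fix x assume "x \<in> inv \<sigma> ` {1..n}"
      then obtain j where j: "j \<in> {1..n}" "x = inv \<sigma> j" by auto
      then have "j \<in> {1..N}" using assms(2) by auto
      then have "inv \<sigma> j \<in> {1..N}" using permutes_in_image[OF permutes_inv[OF assms(1)], of j] by blast
      then show "x \<in> {s\<in>{1..N}. \<sigma> s \<in> {1..n}}" using j permutes_inverses[OF assms(1)] by simp
    qed
  qed
  moreover have "inj (inv \<sigma>)" using permutes_inj[OF permutes_inv[OF assms(1)]] .
  ultimately show ?thesis by (simp add: card_image inj_on_subset)
qed

lemma pc_gtt: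
  assumes val: "valid N (m,v,e) (n,w,f) \<sigma> J" and mN: "m \<le> N" and nN: "n \<le> N"
    and agree: "\<forall>s\<in>J. \<pi> s = \<sigma> s"
  shows "pc N (m,v,e) (n,w,f) \<sigma> J = gtt_cost p C dX dY y0 (m,v,e) (n,w,f) J \<pi>"
proof -
  have \<sigma>p: "\<sigma> permutes {1..N}" and Jm: "J \<subseteq> {1..m}" and Jn: "\<forall>s\<in>J. \<sigma> s \<in> {1..n}"
    using val by (auto simp: valid_def)
  define Sn where "Sn = {s\<in>{1..N}. \<sigma> s \<in> {1..n}}"
  have cSn: "card Sn = n" unfolding Sn_def by (rule card_Sn[OF \<sigma>p nN])
  have JN: "J \<subseteq> {1..N}" using Jm mN by auto
  have JSn: "J \<subseteq> Sn" using JN Jn by (auto simp: Sn_def)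
  have finJ: "finite J" using Jm finite_subset by blast
  have cJm: "card J \<le> m" using card_mono[OF _ Jm] by simp
  have cJn: "card J \<le> n" using card_mono[OF _ JSn] cSn by (simp add: Sn_def)
  have "(\<Sum>s\<in>{1..N}. vq (m,v,e) (n,w,f) \<sigma> J s)
      = (\<Sum>s\<in>{1..N} - J. vq (m,v,e) (n,w,f) \<sigma> J s) + (\<Sum>s\<in>J. vq (m,v,e) (n,w,f) \<sigma> J s)"
    by (rule sum.subset_diff[OF JN]) simp
  also have "(\<Sum>s\<in>J. vq (m,v,e) (n,w,f) \<sigma> J s) = (\<Sum>i\<in>J. dX (v i) (w (\<pi> i)) powr p)"
    using agree by (intro sum.cong) (auto simp: vq_def)
  also have "(\<Sum>s\<in>{1..N} - J. vq (m,v,e) (n,w,f) \<sigma> J s)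
      = (\<Sum>s\<in>{1..N} - J. if s \<in> {1..m} then C powr p else 0)
        + (\<Sum>s\<in>{1..N} - J. if \<sigma> s \<in> {1..n} then C powr p else 0)"
    by (simp add: vq_def sum.distrib)
  also have "(\<Sum>s\<in>{1..N} - J. if s \<in> {1..m} then C powr p else 0) = real (card ({1..m} - J)) * C powr p"
  proof -
    have "{s \<in> {1..N} - J. s \<in> {1..m}} = {1..m} - J" using mN by auto
    moreover have "(\<Sum>s\<in>{1..N} - J. if s \<in> {1..m} then C powr p else 0) = real (card {s \<in> {1..N} - J. s \<in> {1..m}}) * C powr p"
      by (rule sum_if_const) simp
    ultimately show ?thesis by simp
  qed
  also have "(\<Sum>s\<in>{1..N} - J. if \<sigma> s \<in> {1..n} then C powr p else 0) = real (card (Sn - J)) * C powr p"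
  proof -
    have "{s \<in> {1..N} - J. \<sigma> s \<in> {1..n}} = Sn - J" by (auto simp: Sn_def)
    moreover have "(\<Sum>s\<in>{1..N} - J. if \<sigma> s \<in> {1..n} then C powr p else 0) = real (card {s \<in> {1..N} - J. \<sigma> s \<in> {1..n}}) * C powr p"
      by (rule sum_if_const) simp
    ultimately show ?thesis by simp
  qed
  also have "card ({1..m} - J) = m - card J" using Jm finJ by (simp add: card_Diff_subset)
  also have "card (Sn - J) = n - card J" using JSn finJ cSn by (simp add: card_Diff_subset)
  finally have V: "(\<Sum>s\<in>{1..N}. vq (m,v,e) (n,w,f) \<sigma> J s)
      = (real m + real n - 2 * real (card J)) * C powr p + (\<Sum>i\<in>J. dX (v i) (w (\<pi> i)) powr p)"
    using cJm cJn by (simp add: of_nat_diff algebra_simps)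
  let ?A = "{1..N} \<times> {1..N} - J \<times> J"
  have JJ: "J \<times> J \<subseteq> {1..N} \<times> {1..N}" using JN by auto
  have "(\<Sum>q\<in>{1..N}\<times>{1..N}. eqq (m,v,e) (n,w,f) \<sigma> J q)
      = (\<Sum>q\<in>?A. eqq (m,v,e) (n,w,f) \<sigma> J q) + (\<Sum>q\<in>J \<times> J. eqq (m,v,e) (n,w,f) \<sigma> J q)"
    by (rule sum.subset_diff[OF JJ]) simp
  also have "(\<Sum>q\<in>J \<times> J. eqq (m,v,e) (n,w,f) \<sigma> J q)
      = (\<Sum>(i, i')\<in>J \<times> J. dY (e i i') (f (\<pi> i) (\<pi> i')) powr p)"
    using agree by (intro sum.cong) (auto simp: eqq_def)
  also have "(\<Sum>q\<in>?A. eqq (m,v,e) (n,w,f) \<sigma> J q)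
     = (\<Sum>q\<in>?A. dY (ev m e (fst q) (snd q)) y0 powr p)
       + (\<Sum>q\<in>?A. dY y0 (ev n f (\<sigma> (fst q)) (\<sigma> (snd q))) powr p)"
    by (subst sum.distrib[symmetric], intro sum.cong) (auto simp: eqq_def)
  also have "(\<Sum>q\<in>?A. dY (ev m e (fst q) (snd q)) y0 powr p)
      = (\<Sum>(i, i')\<in>{1..m} \<times> {1..m} - J \<times> J. dY (e i i') y0 powr p)"
  proof (rule sum.mono_neutral_cong_right)
    show "{1..m} \<times> {1..m} - J \<times> J \<subseteq> ?A" using mN by auto
    show "\<forall>q\<in>?A - ({1..m} \<times> {1..m} - J \<times> J). dY (ev m e (fst q) (snd q)) y0 powr p = 0"
    proof
      fix q assume "q \<in> ?A - ({1..m} \<times> {1..m} - J \<times> J)"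
      then have "\<not> (fst q \<in> {1..m} \<and> snd q \<in> {1..m})" by (cases q) auto
      then have "ev m e (fst q) (snd q) = y0" unfolding ev_def by meson
      then show "dY (ev m e (fst q) (snd q)) y0 powr p = 0" by simp
    qed
    show "dY (ev m e (fst q) (snd q)) y0 powr p = (case q of (i, i') \<Rightarrow> dY (e i i') y0 powr p)"
      if "q \<in> {1..m} \<times> {1..m} - J \<times> J" for q
      using that by (cases q) (simp add: ev_def)
  qed simp
  also have "(\<Sum>q\<in>?A. dY y0 (ev n f (\<sigma> (fst q)) (\<sigma> (snd q))) powr p)
      = (\<Sum>q\<in>?A. (\<lambda>q. dY y0 (ev n f (fst q) (snd q)) powr p) (map_prod \<sigma> \<sigma> q))"
    by (intro sum.cong) (auto simp: map_prod_def split: prod.splits)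
  also have "\<dots> = (\<Sum>q\<in>{1..N} \<times> {1..N} - \<sigma> ` J \<times> \<sigma> ` J. dY y0 (ev n f (fst q) (snd q)) powr p)"
    by (rule sum.reindex_bij_betw[OF perm_pair_bij[OF \<sigma>p]])
  also have "\<sigma> ` J = \<pi> ` J" using agree by (auto intro: image_cong)
  also have "(\<Sum>q\<in>{1..N} \<times> {1..N} - \<pi> ` J \<times> \<pi> ` J. dY y0 (ev n f (fst q) (snd q)) powr p)
      = (\<Sum>(j, j')\<in>{1..n} \<times> {1..n} - \<pi> ` J \<times> \<pi> ` J. dY y0 (f j j') powr p)"
  proof (rule sum.mono_neutral_cong_right)
    show "{1..n} \<times> {1..n} - \<pi> ` J \<times> \<pi> ` J \<subseteq> {1..N} \<times> {1..N} - \<pi> ` J \<times> \<pi> ` J" using nN by auto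
    show "\<forall>q\<in>({1..N} \<times> {1..N} - \<pi> ` J \<times> \<pi> ` J) - ({1..n} \<times> {1..n} - \<pi> ` J \<times> \<pi> ` J). dY y0 (ev n f (fst q) (snd q)) powr p = 0"
    proof
      fix q assume "q \<in> ({1..N} \<times> {1..N} - \<pi> ` J \<times> \<pi> ` J) - ({1..n} \<times> {1..n} - \<pi> ` J \<times> \<pi> ` J)"
      then have "\<not> (fst q \<in> {1..n} \<and> snd q \<in> {1..n})" by (cases q) auto
      then have "ev n f (fst q) (snd q) = y0" unfolding ev_def by meson
      then show "dY y0 (ev n f (fst q) (snd q)) powr p = 0" by simp
    qed
    show "dY y0 (ev n f (fst q) (snd q)) powr p = (case q of (j, j') \<Rightarrow> dY y0 (f j j') powr p)"
      if "q \<in> {1..n} \<times> {1..n} - \<pi> ` J \<times> \<pi> ` J" for q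
      using that by (cases q) (simp add: ev_def)
  qed simp
  finally have E: "(\<Sum>q\<in>{1..N}\<times>{1..N}. eqq (m,v,e) (n,w,f) \<sigma> J q)
     = (\<Sum>(i, i')\<in>{1..m} \<times> {1..m} - J \<times> J. dY (e i i') y0 powr p)
       + (\<Sum>(j, j')\<in>{1..n} \<times> {1..n} - \<pi> ` J \<times> \<pi> ` J. dY y0 (f j j') powr p)
       + (\<Sum>(i, i')\<in>J \<times> J. dY (e i i') (f (\<pi> i) (\<pi> i')) powr p)" .
  show ?thesis unfolding pc_def gtt_cost_def prod.case using V E by (simp add: algebra_simps)
qed


lemma TT_eq:
  assumes mn: "m \<le> n" and nN: "n \<le> N"
  shows "{gtt_cost p C dX dY y0 (m,v,e) (n,w,f) I \<pi> | I \<pi>. I \<subseteq> {1..fst (m,v,e)} \<and> \<pi> permutes {1..fst (n,w,f)}}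
       = TT N (m,v,e) (n,w,f)"
proof
  show "{gtt_cost p C dX dY y0 (m,v,e) (n,w,f) I \<pi> | I \<pi>. I \<subseteq> {1..fst (m,v,e)} \<and> \<pi> permutes {1..fst (n,w,f)}}
       \<subseteq> TT N (m,v,e) (n,w,f)"
  proof
    fix x assume "x \<in> {gtt_cost p C dX dY y0 (m,v,e) (n,w,f) I \<pi> | I \<pi>. I \<subseteq> {1..fst (m,v,e)} \<and> \<pi> permutes {1..fst (n,w,f)}}"
    then obtain I \<pi> where x: "x = gtt_cost p C dX dY y0 (m,v,e) (n,w,f) I \<pi>" and I: "I \<subseteq> {1..m}"
      and \<pi>: "\<pi> permutes {1..n}" by auto
    have \<pi>N: "\<pi> permutes {1..N}" using permutes_subset[OF \<pi>] nN by auto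
    have "\<forall>s\<in>I. \<pi> s \<in> {1..n}" using I mn permutes_in_image[OF \<pi>] by auto
    then have val: "valid N (m,v,e) (n,w,f) \<pi> I" using \<pi>N I by (auto simp: valid_def)
    have "pc N (m,v,e) (n,w,f) \<pi> I = x" using pc_gtt[OF val] mn nN x by simp
    then show "x \<in> TT N (m,v,e) (n,w,f)" using val unfolding TT_def by blast
  qed
  show "TT N (m,v,e) (n,w,f) \<subseteq>
     {gtt_cost p C dX dY y0 (m,v,e) (n,w,f) I \<pi> | I \<pi>. I \<subseteq> {1..fst (m,v,e)} \<and> \<pi> permutes {1..fst (n,w,f)}}"
  proof
    fix x assume "x \<in> TT N (m,v,e) (n,w,f)"
    then obtain \<sigma> J where x: "x = pc N (m,v,e) (n,w,f) \<sigma> J" and val: "valid N (m,v,e) (n,w,f) \<sigma> J"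
      unfolding TT_def by blast
    have \<sigma>p: "\<sigma> permutes {1..N}" and J: "J \<subseteq> {1..m}" and Jn: "\<sigma> ` J \<subseteq> {1..n}"
      using val by (auto simp: valid_def)
    have "inj_on \<sigma> J" using permutes_inj_on[OF \<sigma>p] .
    moreover have "J \<subseteq> {1..n}" using J mn by auto
    ultimately obtain \<pi> where \<pi>: "\<pi> permutes {1..n}" "\<forall>s\<in>J. \<pi> s = \<sigma> s"
      using perm_extend[of "{1..n}" J \<sigma>] Jn by auto
    have "x = gtt_cost p C dX dY y0 (m,v,e) (n,w,f) J \<pi>"
      using pc_gtt[OF val] mn nN \<pi> x by simp
    then show "x \<in> {gtt_cost p C dX dY y0 (m,v,e) (n,w,f) I \<pi> | I \<pi>. I \<subseteq> {1..fst (m,v,e)} \<and> \<pi> permutes {1..fst (n,w,f)}}"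
      using J \<pi> by auto
  qed
qed

lemma valid_id: "valid N G H id {}"
  by (simp add: valid_def)

lemma TT_fin: assumes "fst G \<le> N" shows "finite (TT N G H)" "TT N G H \<noteq> {}"
proof -
  have "TT N G H \<subseteq> (\<lambda>(\<sigma>, J). pc N G H \<sigma> J) ` ({\<sigma>. \<sigma> permutes {1..N}} \<times> Pow {1..N})"
    using assms unfolding TT_def valid_def by (force intro!: image_eqI)
  moreover have "finite ({\<sigma>. \<sigma> permutes {1..N}} \<times> Pow {1..N})"
    by (simp add: finite_permutations)
  ultimately show "finite (TT N G H)" by (meson finite_imageI finite_subset)
  show "TT N G H \<noteq> {}" using valid_id unfolding TT_def by blast
qed

lemma TT_nn: "x \<in> TT N G H \<Longrightarrow> x \<ge> 0"
  unfolding TT_def using pc_nn[of N G H] by blast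

lemma sum_perm_reindex:
  assumes "\<sigma> permutes A"
  shows "(\<Sum>s\<in>A. g (\<sigma> s)) = (\<Sum>s\<in>A. g s)"
  by (rule sum.reindex_bij_betw[OF permutes_imp_bij[OF assms]])

lemma sum_perm_reindex2:
  assumes "\<sigma> permutes A"
  shows "(\<Sum>q\<in>A \<times> A. g (\<sigma> (fst q), \<sigma> (snd q))) = (\<Sum>q\<in>A \<times> A. g q)"
proof -
  have "(\<Sum>q\<in>A \<times> A - {} \<times> {}. g (map_prod \<sigma> \<sigma> q)) = (\<Sum>q\<in>A \<times> A - \<sigma> ` {} \<times> \<sigma> ` {}. g q)"
    by (rule sum.reindex_bij_betw[OF perm_pair_bij[OF assms]])
  moreover have "\<And>q. map_prod \<sigma> \<sigma> q = (\<sigma> (fst q), \<sigma> (snd q))" by (simp add: map_prod_def split: prod.splits)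
  ultimately show ?thesis by simp
qed

lemma pc_sym:
  assumes val: "valid N G H \<sigma> J"
  shows "valid N H G (inv \<sigma>) (\<sigma> ` J) \<and> pc N H G (inv \<sigma>) (\<sigma> ` J) = pc N G H \<sigma> J"
proof -
  obtain m v e where G: "G = (m,v,e)" by (cases G) auto
  obtain n w f where H: "H = (n,w,f)" by (cases H) auto
  have \<sigma>p: "\<sigma> permutes {1..N}" and J: "J \<subseteq> {1..m}" and Jn: "\<forall>s\<in>J. \<sigma> s \<in> {1..n}"
    using val by (auto simp: valid_def G H)
  have iv: "\<And>x. inv \<sigma> (\<sigma> x) = x" using permutes_inverses[OF \<sigma>p] by simp
  have memJ: "\<And>x. \<sigma> x \<in> \<sigma> ` J \<longleftrightarrow> x \<in> J" using permutes_inj[OF \<sigma>p] by (simp add: inj_image_mem_iff)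
  have v2: "valid N H G (inv \<sigma>) (\<sigma> ` J)"
    using J Jn permutes_inv[OF \<sigma>p] unfolding valid_def G H by (auto simp: iv)
  have V: "vq H G (inv \<sigma>) (\<sigma> ` J) (\<sigma> s) = vq G H \<sigma> J s" for s
    unfolding vq_def G H by (simp add: iv memJ dX_sym)
  have E: "eqq H G (inv \<sigma>) (\<sigma> ` J) (\<sigma> (fst q), \<sigma> (snd q)) = eqq G H \<sigma> J q" for q
    unfolding eqq_def G H by (simp add: iv memJ dY_sym)
  have "pc N H G (inv \<sigma>) (\<sigma> ` J) = pc N G H \<sigma> J"
    unfolding pc_def
    using sum_perm_reindex[OF \<sigma>p, of "vq H G (inv \<sigma>) (\<sigma> ` J)"]
      sum_perm_reindex2[OF \<sigma>p, of "eqq H G (inv \<sigma>) (\<sigma> ` J)"] V E by simp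
  with v2 show ?thesis by simp
qed

lemma TT_sym: "TT N G H = TT N H G"
proof -
  have *: "TT N G H \<subseteq> TT N H G" for G H
  proof
    fix x assume "x \<in> TT N G H"
    then obtain \<sigma> J where "x = pc N G H \<sigma> J" "valid N G H \<sigma> J" unfolding TT_def by blast
    then have "valid N H G (inv \<sigma>) (\<sigma> ` J)" "x = pc N H G (inv \<sigma>) (\<sigma> ` J)"
      using pc_sym[of N G H \<sigma> J] by auto
    then show "x \<in> TT N H G" unfolding TT_def by blast
  qed
  show ?thesis using *[of G H] *[of H G] by blast
qed

lemma gtt_dist_TT:
  assumes "fst G \<le> N" "fst H \<le> N"
  shows "gtt_dist p C dX dY y0 G H = Min (TT N G H) powr (1/p)"
proof -
  obtain m v e where G: "G = (m,v,e)" by (cases G) auto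
  obtain n w f where H: "H = (n,w,f)" by (cases H) auto
  show ?thesis
  proof (cases "m \<le> n")
    case True
    then show ?thesis using TT_eq[of m n N v e w f] assms
      unfolding gtt_dist_def gtt_dist_le_def G H by simp
  next
    case False
    then show ?thesis using TT_eq[of n m N w f v e] assms TT_sym[of N G H]
      unfolding gtt_dist_def gtt_dist_le_def G H by simp
  qed
qed


lemma pc_relabel:
  assumes \<rho>: "\<rho> permutes {1..m}" and mN: "m \<le> N"
    and hv: "\<forall>i\<in>{1..m}. v i = v' (\<rho> i)"
    and he: "\<forall>i\<in>{1..m}. \<forall>i'\<in>{1..m}. e i i' = e' (\<rho> i) (\<rho> i')"
    and J: "J \<subseteq> {1..m}"
  shows "pc N (m,v,e) H (\<sigma>' \<circ> \<rho>) J = pc N (m,v',e') H \<sigma>' (\<rho> ` J)"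
proof -
  obtain n w f where H: "H = (n,w,f)" by (cases H) auto
  have \<rho>N: "\<rho> permutes {1..N}" using permutes_subset[OF \<rho>] mN by auto
  have memJ: "\<And>x. \<rho> x \<in> \<rho> ` J \<longleftrightarrow> x \<in> J" using permutes_inj[OF \<rho>] by (simp add: inj_image_mem_iff)
  have memm: "\<And>x. \<rho> x \<in> {1..m} \<longleftrightarrow> x \<in> {1..m}" using permutes_in_image[OF \<rho>] by simp
  have V: "vq (m,v',e') H \<sigma>' (\<rho> ` J) (\<rho> s) = vq (m,v,e) H (\<sigma>' \<circ> \<rho>) J s" for s
  proof (cases "s \<in> J")
    case True
    then have "s \<in> {1..m}" using J by auto
    then show ?thesis using True hv unfolding vq_def H by (simp add: memJ)
  next
    case False
    then show ?thesis using memm[of s] unfolding vq_def H by (auto simp: memJ)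
  qed
  have ev: "ev m e' (\<rho> a) (\<rho> b) = ev m e a b" for a b
    unfolding ev_def using he memm by (simp del: atLeastAtMost_iff)
  have E: "eqq (m,v',e') H \<sigma>' (\<rho> ` J) (\<rho> (fst q), \<rho> (snd q)) = eqq (m,v,e) H (\<sigma>' \<circ> \<rho>) J q" for q
  proof (cases "fst q \<in> J \<and> snd q \<in> J")
    case True
    then have "fst q \<in> {1..m}" "snd q \<in> {1..m}" using J by auto
    then show ?thesis using True he unfolding eqq_def H by (simp add: memJ)
  next
    case False
    then have "\<not> (\<rho> (fst q) \<in> \<rho> ` J \<and> \<rho> (snd q) \<in> \<rho> ` J)" by (simp add: memJ)
    with False show ?thesis unfolding eqq_def H by (simp only: ev fst_conv snd_conv prod.case if_False o_def)
  qed
  show ?thesis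
    unfolding pc_def
    using sum_perm_reindex[OF \<rho>N, of "vq (m,v',e') H \<sigma>' (\<rho> ` J)"]
      sum_perm_reindex2[OF \<rho>N, of "eqq (m,v',e') H \<sigma>' (\<rho> ` J)"] V E by simp
qed

lemma TT_relabel:
  assumes ge: "graph_eq G G'" and mN: "fst G \<le> N"
  shows "TT N G H = TT N G' H"
proof -
  obtain m v e where G: "G = (m,v,e)" by (cases G) auto
  obtain m' v' e' where G': "G' = (m',v',e')" by (cases G') auto
  from ge obtain \<rho> where mm: "m = m'" and \<rho>: "\<rho> permutes {1..m}"
    and hv: "\<forall>i\<in>{1..m}. v i = v' (\<rho> i)" and he: "\<forall>i\<in>{1..m}. \<forall>i'\<in>{1..m}. e i i' = e' (\<rho> i) (\<rho> i')"
    unfolding graph_eq_def G G' by auto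
  have m: "m \<le> N" using mN G by simp
  have \<rho>N: "\<rho> permutes {1..N}" using permutes_subset[OF \<rho>] m by auto
  have ii: "\<And>x. inv \<rho> (\<rho> x) = x" "\<And>x. \<rho> (inv \<rho> x) = x" using permutes_inverses[OF \<rho>] by auto
  show ?thesis
  proof
    show "TT N G H \<subseteq> TT N G' H"
    proof
      fix x assume "x \<in> TT N G H"
      then obtain \<sigma> J where x: "x = pc N G H \<sigma> J" and val: "valid N G H \<sigma> J" unfolding TT_def by blast
      have \<sigma>p: "\<sigma> permutes {1..N}" and J: "J \<subseteq> {1..m}" and Jn: "\<forall>s\<in>J. \<sigma> s \<in> {1..fst H}"
        using val by (auto simp: valid_def G)
      have c: "(\<sigma> \<circ> inv \<rho>) \<circ> \<rho> = \<sigma>" by (auto simp: ii)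
      have "x = pc N G' H (\<sigma> \<circ> inv \<rho>) (\<rho> ` J)"
        using pc_relabel[OF \<rho> m hv he J, of H "\<sigma> \<circ> inv \<rho>"] x unfolding c G G' mm by simp
      moreover have "valid N G' H (\<sigma> \<circ> inv \<rho>) (\<rho> ` J)"
      proof -
        have "\<forall>x\<in>J. \<rho> x \<in> {1..m}" using J permutes_in_image[OF \<rho>] by blast
        then show ?thesis
          unfolding valid_def G' using J Jn mm permutes_compose[OF permutes_inv[OF \<rho>N] \<sigma>p]
          by (auto simp: ii)
      qed
      ultimately show "x \<in> TT N G' H" unfolding TT_def by blast
    qed
    show "TT N G' H \<subseteq> TT N G H"
    proof
      fix x assume "x \<in> TT N G' H"
      then obtain \<sigma> J where x: "x = pc N G' H \<sigma> J" and val: "valid N G' H \<sigma> J" unfolding TT_def by blast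
      have \<sigma>p: "\<sigma> permutes {1..N}" and J: "J \<subseteq> {1..m}" and Jn: "\<forall>s\<in>J. \<sigma> s \<in> {1..fst H}"
        using val mm by (auto simp: valid_def G')
      have J': "inv \<rho> ` J \<subseteq> {1..m}" using J permutes_in_image[OF permutes_inv[OF \<rho>]] by auto
      have rJ: "\<rho> ` (inv \<rho> ` J) = J" by (auto simp: image_image ii)
      have "x = pc N G H (\<sigma> \<circ> \<rho>) (inv \<rho> ` J)"
        using pc_relabel[OF \<rho> m hv he J', of H \<sigma>] x unfolding rJ G G' mm by simp
      moreover have "valid N G H (\<sigma> \<circ> \<rho>) (inv \<rho> ` J)"
        unfolding valid_def G using J' Jn permutes_compose[OF \<rho>N \<sigma>p] by (auto simp: ii)
      ultimately show "x \<in> TT N G H" unfolding TT_def by blast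
    qed
  qed
qed

lemma pc_self:
  assumes "m \<le> N"
  shows "valid N (m,v,e) (m,v,e) id {1..m}" "pc N (m,v,e) (m,v,e) id {1..m} = 0"
proof -
  show "valid N (m,v,e) (m,v,e) id {1..m}" using assms by (auto simp: valid_def)
  have "vq (m,v,e) (m,v,e) id {1..m} s = 0" for s by (simp add: vq_def)
  moreover have "eqq (m,v,e) (m,v,e) id {1..m} q = 0" for q by (simp add: eqq_def ev_def)
  ultimately show "pc N (m,v,e) (m,v,e) id {1..m} = 0" by (simp add: pc_def)
qed


lemma pp_inv: "a \<ge> 0 \<Longrightarrow> (a powr p) powr (1/p) = a"
  using p1 by (simp add: powr_powr)
lemma pp_inv2: "a \<ge> 0 \<Longrightarrow> (a powr (1/p)) powr p = a"
  using p1 by (simp add: powr_powr)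

lemma F1: assumes "x \<ge> 0" "y \<ge> 0" shows "x + y \<le> (x powr (1/p) + y powr (1/p)) powr p"
  using superadd_powr[of "x powr (1/p)" "y powr (1/p)" p] p1 assms by (simp add: pp_inv2)

lemma F2: assumes "a \<ge> 0" "b \<ge> 0" "c \<le> a + b" "c \<ge> 0"
  shows "c powr p \<le> ((a powr p) powr (1/p) + (b powr p) powr (1/p)) powr p"
  using assms p1 by (simp add: pp_inv powr_mono2)

lemma F3: assumes "a \<ge> 0" "b \<ge> 0" "c \<ge> 0"
  shows "(a+b) powr p + c powr p \<le> (a + (b powr p + c powr p) powr (1/p)) powr p"
proof -
  define x :: "bool \<Rightarrow> real" where "x i = (if i then a else 0)" for i
  define y :: "bool \<Rightarrow> real" where "y i = (if i then b else c)" for i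
  have m: "(\<Sum>i\<in>UNIV. (x i + y i) powr p) powr (1/p)
     \<le> (\<Sum>i\<in>UNIV. x i powr p) powr (1/p) + (\<Sum>i\<in>UNIV. y i powr p) powr (1/p)"
    by (rule minkowski) (use assms p1 in \<open>auto simp: x_def y_def\<close>)
  have S: "(\<Sum>i\<in>UNIV. (x i + y i) powr p) = (a+b) powr p + c powr p"
    by (simp add: UNIV_bool x_def y_def)
  have "(\<Sum>i\<in>UNIV. x i powr p) = a powr p" by (simp add: UNIV_bool x_def)
  moreover have "(\<Sum>i\<in>UNIV. y i powr p) = b powr p + c powr p" by (simp add: UNIV_bool y_def)
  ultimately have m2: "((a+b) powr p + c powr p) powr (1/p) \<le> a + (b powr p + c powr p) powr (1/p)"
    using m S assms by (simp add: pp_inv)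
  have "(a+b) powr p + c powr p = (((a+b) powr p + c powr p) powr (1/p)) powr p"
    using assms by (simp add: pp_inv2)
  also have "\<dots> \<le> (a + (b powr p + c powr p) powr (1/p)) powr p"
    using m2 p1 by (intro powr_mono2) auto
  finally show ?thesis .
qed

lemma F3': assumes "a \<ge> 0" "b \<ge> 0" "c \<ge> 0"
  shows "a powr p + (b+c) powr p \<le> ((a powr p + b powr p) powr (1/p) + c) powr p"
  using F3[of c b a] assms by (simp add: add.commute)

lemma F_scale:
  assumes "x \<ge> 0" "y \<ge> 0" "c \<ge> 0" "Q \<le> (x powr (1/p) + y powr (1/p)) powr p"
  shows "c * Q \<le> ((c*x) powr (1/p) + (c*y) powr (1/p)) powr p"
proof -
  have "((c*x) powr (1/p) + (c*y) powr (1/p)) powr p = (c powr (1/p) * (x powr (1/p) + y powr (1/p))) powr p"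
    using assms by (simp add: powr_mult algebra_simps)
  also have "\<dots> = c * (x powr (1/p) + y powr (1/p)) powr p"
    using assms by (simp add: powr_mult pp_inv2)
  finally show ?thesis using assms by (simp add: mult_left_mono)
qed

lemma mink_app:
  fixes X Y Z :: "'i \<Rightarrow> real"
  assumes "finite A" "\<And>i. X i \<ge> 0" "\<And>i. Y i \<ge> 0" "\<And>i. Z i \<ge> 0"
    "\<And>i. i \<in> A \<Longrightarrow> Z i \<le> (X i powr (1/p) + Y i powr (1/p)) powr p"
  shows "(\<Sum>i\<in>A. Z i) powr (1/p) \<le> (\<Sum>i\<in>A. X i) powr (1/p) + (\<Sum>i\<in>A. Y i) powr (1/p)"
proof -
  have "(\<Sum>i\<in>A. Z i) powr (1/p) \<le> (\<Sum>i\<in>A. (X i powr (1/p) + Y i powr (1/p)) powr p) powr (1/p)"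
    using assms p1 by (intro powr_mono2 sum_mono sum_nonneg) auto
  also have "\<dots> \<le> (\<Sum>i\<in>A. (X i powr (1/p)) powr p) powr (1/p) + (\<Sum>i\<in>A. (Y i powr (1/p)) powr p) powr (1/p)"
    by (rule minkowski) (use assms p1 in auto)
  also have "\<dots> = (\<Sum>i\<in>A. X i) powr (1/p) + (\<Sum>i\<in>A. Y i) powr (1/p)"
    using assms by (simp add: pp_inv2)
  finally show ?thesis .
qed


lemma Cp_nn: "C powr p \<ge> 0" by simp

lemma vq_tri:
  assumes v1: "valid N (m,v,e) (n,w,f) \<sigma>1 J1" and v2: "valid N (n,w,f) (k,u,g) \<sigma>2 J2"
  shows "vq (m,v,e) (k,u,g) (\<sigma>2 \<circ> \<sigma>1) {s\<in>J1. \<sigma>1 s \<in> J2} s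
     \<le> (vq (m,v,e) (n,w,f) \<sigma>1 J1 s powr (1/p) + vq (n,w,f) (k,u,g) \<sigma>2 J2 (\<sigma>1 s) powr (1/p)) powr p"
proof -
  have J1: "J1 \<subseteq> {1..m}" "\<forall>s\<in>J1. \<sigma>1 s \<in> {1..n}" and J2: "J2 \<subseteq> {1..n}" "\<forall>s\<in>J2. \<sigma>2 s \<in> {1..k}"
    using v1 v2 by (auto simp: valid_def)
  let ?Q = "vq (m,v,e) (k,u,g) (\<sigma>2 \<circ> \<sigma>1) {s\<in>J1. \<sigma>1 s \<in> J2} s"
  let ?x = "vq (m,v,e) (n,w,f) \<sigma>1 J1 s"
  let ?y = "vq (n,w,f) (k,u,g) \<sigma>2 J2 (\<sigma>1 s)"
  show ?thesis
  proof (cases "s \<in> J1 \<and> \<sigma>1 s \<in> J2")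
    case True
    then have "?Q = dX (v s) (u (\<sigma>2 (\<sigma>1 s))) powr p" "?x = dX (v s) (w (\<sigma>1 s)) powr p"
      "?y = dX (w (\<sigma>1 s)) (u (\<sigma>2 (\<sigma>1 s))) powr p" by (auto simp: vq_def)
    then show ?thesis using F2[OF dX_nn dX_nn dX_tri dX_nn] by simp
  next
    case False
    have "?Q \<le> ?x + ?y"
    proof (cases "s \<in> J1")
      case True
      with False have "\<sigma>1 s \<notin> J2" by simp
      moreover have "\<sigma>1 s \<in> {1..n}" using True J1 by auto
      ultimately have "?y = C powr p + (if \<sigma>2 (\<sigma>1 s) \<in> {1..k} then C powr p else 0)"
        by (simp add: vq_def)
      moreover have "?Q \<le> C powr p + (if \<sigma>2 (\<sigma>1 s) \<in> {1..k} then C powr p else 0)"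
        using False by (auto simp: vq_def)
      ultimately show ?thesis using vq_nn[of "(m,v,e)" "(n,w,f)" \<sigma>1 J1 s] by linarith
    next
      case nJ1: False
      show ?thesis
      proof (cases "\<sigma>1 s \<in> J2")
        case True
        then have "\<sigma>1 s \<in> {1..n}" using J2 by auto
        then have "?x = (if s \<in> {1..m} then C powr p else 0) + C powr p"
          using nJ1 by (auto simp: vq_def)
        moreover have "?Q \<le> (if s \<in> {1..m} then C powr p else 0) + C powr p"
          using nJ1 by (auto simp: vq_def)
        ultimately show ?thesis using vq_nn[of "(n,w,f)" "(k,u,g)" \<sigma>2 J2 "\<sigma>1 s"] by linarith
      next
        case False
        then show ?thesis using nJ1 by (auto simp: vq_def)
      qed
    qed
    then show ?thesis using F1[OF vq_nn vq_nn] by (rule order_trans)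
  qed
qed

lemma eqq_tri:
  assumes v1: "valid N (m,v,e) (n,w,f) \<sigma>1 J1" and v2: "valid N (n,w,f) (k,u,g) \<sigma>2 J2"
  shows "eqq (m,v,e) (k,u,g) (\<sigma>2 \<circ> \<sigma>1) {s\<in>J1. \<sigma>1 s \<in> J2} (a, b)
     \<le> (eqq (m,v,e) (n,w,f) \<sigma>1 J1 (a, b) powr (1/p) + eqq (n,w,f) (k,u,g) \<sigma>2 J2 (\<sigma>1 a, \<sigma>1 b) powr (1/p)) powr p"
proof -
  have J1: "J1 \<subseteq> {1..m}" "\<forall>s\<in>J1. \<sigma>1 s \<in> {1..n}" and J2: "J2 \<subseteq> {1..n}" "\<forall>s\<in>J2. \<sigma>2 s \<in> {1..k}"
    using v1 v2 by (auto simp: valid_def)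
  let ?Q = "eqq (m,v,e) (k,u,g) (\<sigma>2 \<circ> \<sigma>1) {s\<in>J1. \<sigma>1 s \<in> J2} (a, b)"
  let ?x = "eqq (m,v,e) (n,w,f) \<sigma>1 J1 (a, b)"
  let ?y = "eqq (n,w,f) (k,u,g) \<sigma>2 J2 (\<sigma>1 a, \<sigma>1 b)"
  let ?a = "\<sigma>1 a" and ?b = "\<sigma>1 b"
  consider (both) "a \<in> J1 \<and> b \<in> J1" "?a \<in> J2 \<and> ?b \<in> J2"
    | (one) "a \<in> J1 \<and> b \<in> J1" "\<not> (?a \<in> J2 \<and> ?b \<in> J2)"
    | (two) "\<not> (a \<in> J1 \<and> b \<in> J1)" "?a \<in> J2 \<and> ?b \<in> J2"
    | (none) "\<not> (a \<in> J1 \<and> b \<in> J1)" "\<not> (?a \<in> J2 \<and> ?b \<in> J2)" by blast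
  then show ?thesis
  proof cases
    case both
    then have "?Q = dY (e a b) (g (\<sigma>2 ?a) (\<sigma>2 ?b)) powr p" "?x = dY (e a b) (f ?a ?b) powr p"
      "?y = dY (f ?a ?b) (g (\<sigma>2 ?a) (\<sigma>2 ?b)) powr p" by (auto simp: eqq_def)
    then show ?thesis using F2[OF dY_nn dY_nn dY_tri dY_nn] by simp
  next
    case one
    have eva: "ev m e a b = e a b" using one J1 by (auto simp: ev_def)
    have evb: "ev n f ?a ?b = f ?a ?b" using one J1 by (auto simp: ev_def)
    have Q: "?Q = dY (e a b) y0 powr p + dY y0 (ev k g (\<sigma>2 ?a) (\<sigma>2 ?b)) powr p"
      using one by (auto simp: eqq_def eva)
    have x: "?x = dY (e a b) (f ?a ?b) powr p" using one by (auto simp: eqq_def)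
    have y: "?y = dY (f ?a ?b) y0 powr p + dY y0 (ev k g (\<sigma>2 ?a) (\<sigma>2 ?b)) powr p"
      using one by (auto simp: eqq_def evb)
    have "?Q \<le> (dY (e a b) (f ?a ?b) + dY (f ?a ?b) y0) powr p + dY y0 (ev k g (\<sigma>2 ?a) (\<sigma>2 ?b)) powr p"
      unfolding Q using dY_tri p1 by (simp add: powr_mono2)
    also have "\<dots> \<le> (dY (e a b) (f ?a ?b) + (dY (f ?a ?b) y0 powr p + dY y0 (ev k g (\<sigma>2 ?a) (\<sigma>2 ?b)) powr p) powr (1/p)) powr p"
      by (rule F3) auto
    also have "\<dots> = (?x powr (1/p) + ?y powr (1/p)) powr p" unfolding x y by (simp add: pp_inv)
    finally show ?thesis .
  next
    case two
    have evb: "ev n f ?a ?b = f ?a ?b" using two J2 by (auto simp: ev_def)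
    have evc: "ev k g (\<sigma>2 ?a) (\<sigma>2 ?b) = g (\<sigma>2 ?a) (\<sigma>2 ?b)" using two J2 by (auto simp: ev_def)
    have Q: "?Q = dY (ev m e a b) y0 powr p + dY y0 (g (\<sigma>2 ?a) (\<sigma>2 ?b)) powr p"
      using two by (auto simp: eqq_def evc)
    have x: "?x = dY (ev m e a b) y0 powr p + dY y0 (f ?a ?b) powr p" using two by (auto simp: eqq_def evb)
    have y: "?y = dY (f ?a ?b) (g (\<sigma>2 ?a) (\<sigma>2 ?b)) powr p"
      using two by (auto simp: eqq_def)
    have "?Q \<le> dY (ev m e a b) y0 powr p + (dY y0 (f ?a ?b) + dY (f ?a ?b) (g (\<sigma>2 ?a) (\<sigma>2 ?b))) powr p"
      unfolding Q using dY_tri p1 by (simp add: powr_mono2)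
    also have "\<dots> \<le> ((dY (ev m e a b) y0 powr p + dY y0 (f ?a ?b) powr p) powr (1/p) + dY (f ?a ?b) (g (\<sigma>2 ?a) (\<sigma>2 ?b))) powr p"
      by (rule F3') auto
    also have "\<dots> = (?x powr (1/p) + ?y powr (1/p)) powr p" unfolding x y by (simp add: pp_inv)
    finally show ?thesis .
  next
    case none
    have "?Q \<le> ?x + ?y"
    proof -
      have Q: "?Q = dY (ev m e a b) y0 powr p + dY y0 (ev k g (\<sigma>2 ?a) (\<sigma>2 ?b)) powr p"
        using none by (auto simp: eqq_def)
      have x: "?x = dY (ev m e a b) y0 powr p + dY y0 (ev n f ?a ?b) powr p" using none by (auto simp: eqq_def)
      have y: "?y = dY (ev n f ?a ?b) y0 powr p + dY y0 (ev k g (\<sigma>2 ?a) (\<sigma>2 ?b)) powr p"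
        using none by (auto simp: eqq_def)
      show ?thesis unfolding Q x y by (simp add: add_nonneg_nonneg)
    qed
    then show ?thesis using F1[OF eqq_nn eqq_nn] by (rule order_trans)
  qed
qed


lemma pc_tri:
  assumes v1: "valid N G H \<sigma>1 J1" and v2: "valid N H K \<sigma>2 J2"
  shows "valid N G K (\<sigma>2 \<circ> \<sigma>1) {s\<in>J1. \<sigma>1 s \<in> J2}
    \<and> pc N G K (\<sigma>2 \<circ> \<sigma>1) {s\<in>J1. \<sigma>1 s \<in> J2} powr (1/p)
      \<le> pc N G H \<sigma>1 J1 powr (1/p) + pc N H K \<sigma>2 J2 powr (1/p)"
proof -
  obtain m v e where G: "G = (m,v,e)" by (cases G) auto
  obtain n w f where H: "H = (n,w,f)" by (cases H) auto
  obtain k u g where K: "K = (k,u,g)" by (cases K) auto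
  let ?J = "{s\<in>J1. \<sigma>1 s \<in> J2}" and ?\<tau> = "\<sigma>2 \<circ> \<sigma>1"
  have \<sigma>1: "\<sigma>1 permutes {1..N}" and \<sigma>2: "\<sigma>2 permutes {1..N}" using v1 v2 by (auto simp: valid_def)
  have val: "valid N G K ?\<tau> ?J"
    using v1 v2 permutes_compose[OF \<sigma>1 \<sigma>2] unfolding valid_def by auto
  define A where "A = {1..N} <+> ({1..N} \<times> {1..N})"
  define X where "X = case_sum (vq G H \<sigma>1 J1) (\<lambda>q. 1/2 * eqq G H \<sigma>1 J1 q)"
  define Y where "Y = case_sum (\<lambda>s. vq H K \<sigma>2 J2 (\<sigma>1 s)) (\<lambda>q. 1/2 * eqq H K \<sigma>2 J2 (\<sigma>1 (fst q), \<sigma>1 (snd q)))"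
  define Z where "Z = case_sum (vq G K ?\<tau> ?J) (\<lambda>q. 1/2 * eqq G K ?\<tau> ?J q)"
  have finA: "finite A" unfolding A_def by simp
  have sX: "(\<Sum>i\<in>A. X i) = pc N G H \<sigma>1 J1"
    unfolding A_def X_def pc_def by (simp add: sum.Plus o_def sum_distrib_left)
  have sZ: "(\<Sum>i\<in>A. Z i) = pc N G K ?\<tau> ?J"
    unfolding A_def Z_def pc_def by (simp add: sum.Plus o_def sum_distrib_left)
  have sY: "(\<Sum>i\<in>A. Y i) = pc N H K \<sigma>2 J2"
  proof -
    have "(\<Sum>i\<in>A. Y i) = (\<Sum>s\<in>{1..N}. vq H K \<sigma>2 J2 (\<sigma>1 s))
       + (\<Sum>q\<in>{1..N} \<times> {1..N}. (\<lambda>q. 1/2 * eqq H K \<sigma>2 J2 q) (\<sigma>1 (fst q), \<sigma>1 (snd q)))"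
      unfolding A_def Y_def by (simp add: sum.Plus o_def)
    also have "\<dots> = (\<Sum>s\<in>{1..N}. vq H K \<sigma>2 J2 s) + (\<Sum>q\<in>{1..N} \<times> {1..N}. 1/2 * eqq H K \<sigma>2 J2 q)"
      using sum_perm_reindex[OF \<sigma>1, of "vq H K \<sigma>2 J2"]
        sum_perm_reindex2[OF \<sigma>1, of "\<lambda>q. 1/2 * eqq H K \<sigma>2 J2 q"] by simp
    finally show ?thesis unfolding pc_def by (simp add: sum_distrib_left)
  qed
  have nX: "X i \<ge> 0" for i unfolding X_def by (cases i) (auto intro: vq_nn eqq_nn)
  have nY: "Y i \<ge> 0" for i unfolding Y_def by (cases i) (auto intro: vq_nn eqq_nn)
  have nZ: "Z i \<ge> 0" for i unfolding Z_def by (cases i) (auto intro: vq_nn eqq_nn)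
  have pw: "Z i \<le> (X i powr (1/p) + Y i powr (1/p)) powr p" for i
  proof (cases i)
    case (Inl s)
    then show ?thesis unfolding X_def Y_def Z_def
      using vq_tri[of N m v e n w f \<sigma>1 J1 k u g \<sigma>2 J2 s] v1 v2 unfolding G H K by simp
  next
    case (Inr q)
    obtain a b where q: "q = (a,b)" by (cases q) auto
    have "eqq G K ?\<tau> ?J (a,b) \<le> (eqq G H \<sigma>1 J1 (a,b) powr (1/p) + eqq H K \<sigma>2 J2 (\<sigma>1 a, \<sigma>1 b) powr (1/p)) powr p"
      using eqq_tri[of N m v e n w f \<sigma>1 J1 k u g \<sigma>2 J2 a b] v1 v2 unfolding G H K by simp
    then have "1/2 * eqq G K ?\<tau> ?J (a,b) \<le> ((1/2 * eqq G H \<sigma>1 J1 (a,b)) powr (1/p) + (1/2 * eqq H K \<sigma>2 J2 (\<sigma>1 a, \<sigma>1 b)) powr (1/p)) powr p"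
      by (intro F_scale eqq_nn) auto
    then show ?thesis unfolding X_def Y_def Z_def Inr q by simp
  qed
  have "(\<Sum>i\<in>A. Z i) powr (1/p) \<le> (\<Sum>i\<in>A. X i) powr (1/p) + (\<Sum>i\<in>A. Y i) powr (1/p)"
    by (rule mink_app[OF finA nX nY nZ pw])
  then show ?thesis using val sX sY sZ by simp
qed


lemma pc_zero_eq:
  assumes mX: "is_metric dX" and mY: "is_metric dY" and val: "valid N G H \<sigma> J"
    and z: "pc N G H \<sigma> J = 0" and GN: "fst G \<le> N" and HN: "fst H \<le> N"
  shows "graph_eq G H"
proof -
  obtain m v e where G: "G = (m,v,e)" by (cases G) auto
  obtain n w f where H: "H = (n,w,f)" by (cases H) auto
  have mN: "m \<le> N" and nN: "n \<le> N" using GN HN G H by auto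
  have \<sigma>p: "\<sigma> permutes {1..N}" and J: "J \<subseteq> {1..m}" and Jn: "\<forall>s\<in>J. \<sigma> s \<in> {1..n}"
    using val by (auto simp: valid_def G H)
  have s1: "(\<Sum>s\<in>{1..N}. vq G H \<sigma> J s) \<ge> 0" by (intro sum_nonneg vq_nn)
  have s2: "(\<Sum>q\<in>{1..N}\<times>{1..N}. eqq G H \<sigma> J q) \<ge> 0" by (intro sum_nonneg eqq_nn)
  have "(\<Sum>s\<in>{1..N}. vq G H \<sigma> J s) = 0" "(\<Sum>q\<in>{1..N}\<times>{1..N}. eqq G H \<sigma> J q) = 0"
    using z s1 s2 unfolding pc_def by linarith+
  then have V0: "\<And>s. s \<in> {1..N} \<Longrightarrow> vq G H \<sigma> J s = 0"
    and E0: "\<And>q. q \<in> {1..N}\<times>{1..N} \<Longrightarrow> eqq G H \<sigma> J q = 0"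
    using sum_nonneg_eq_0_iff[of "{1..N}" "vq G H \<sigma> J"] sum_nonneg_eq_0_iff[of "{1..N}\<times>{1..N}" "eqq G H \<sigma> J"]
      vq_nn eqq_nn by auto
  have Cp: "C powr p > 0" using Cpos by simp
  have Jm: "J = {1..m}"
  proof
    show "{1..m} \<subseteq> J"
    proof
      fix s assume s: "s \<in> {1..m}"
      show "s \<in> J"
      proof (rule ccontr)
        assume "s \<notin> J"
        then have "vq G H \<sigma> J s \<ge> C powr p" using s by (auto simp: vq_def G H)
        moreover have "vq G H \<sigma> J s = 0" using V0 s mN by auto
        ultimately show False using Cp by simp
      qed
    qed
  qed (rule J)
  have bk: "s \<in> J" if "s \<in> {1..N}" "\<sigma> s \<in> {1..n}" for s
  proof (rule ccontr)
    assume "s \<notin> J"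
    then have "vq G H \<sigma> J s \<ge> C powr p" using that by (auto simp: vq_def G H)
    moreover have "vq G H \<sigma> J s = 0" using V0 that by auto
    ultimately show False using Cp by simp
  qed
  have img: "\<sigma> ` {1..m} = {1..n}"
  proof
    show "\<sigma> ` {1..m} \<subseteq> {1..n}" using Jn Jm by auto
    show "{1..n} \<subseteq> \<sigma> ` {1..m}"
    proof
      fix j assume j: "j \<in> {1..n}"
      then have jN: "j \<in> {1..N}" using nN by auto
      have "inv \<sigma> j \<in> {1..N}" using permutes_in_image[OF permutes_inv[OF \<sigma>p], of j] jN by blast
      moreover have "\<sigma> (inv \<sigma> j) = j" using permutes_inverses[OF \<sigma>p] by simp
      ultimately have "inv \<sigma> j \<in> J" using bk j by simp
      then show "j \<in> \<sigma> ` {1..m}" using Jm \<open>\<sigma> (inv \<sigma> j) = j\<close> by (metis image_eqI)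
    qed
  qed
  have "card (\<sigma> ` {1..m}) = m" using permutes_inj[OF \<sigma>p] by (simp add: card_image inj_on_subset)
  then have mn: "m = n" using img by simp
  define \<pi> where "\<pi> x = (if x \<in> {1..n} then \<sigma> x else x)" for x
  have \<pi>p: "\<pi> permutes {1..n}"
  proof (rule inj_imp_permutes)
    show "inj_on \<pi> {1..n}" using permutes_inj[OF \<sigma>p] unfolding \<pi>_def inj_on_def inj_def by auto
    show "\<pi> x \<in> {1..n}" if "x \<in> {1..n}" for x using img mn that unfolding \<pi>_def by auto
  qed (auto simp: \<pi>_def)
  have hv: "\<forall>i\<in>{1..n}. v i = w (\<pi> i)"
  proof
    fix i assume i: "i \<in> {1..n}"
    then have iJ: "i \<in> J" using Jm mn by simp
    have "vq G H \<sigma> J i = 0" using V0 i nN by auto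
    then have "dX (v i) (w (\<sigma> i)) = 0" using iJ by (simp add: vq_def G H)
    then show "v i = w (\<pi> i)" using mX i unfolding is_metric_def \<pi>_def by auto
  qed
  have he: "\<forall>i\<in>{1..n}. \<forall>i'\<in>{1..n}. e i i' = f (\<pi> i) (\<pi> i')"
  proof (intro ballI)
    fix i i' assume i: "i \<in> {1..n}" and i': "i' \<in> {1..n}"
    then have iJ: "i \<in> J" "i' \<in> J" using Jm mn by auto
    have "eqq G H \<sigma> J (i, i') = 0" using E0 i i' nN by auto
    then have "dY (e i i') (f (\<sigma> i) (\<sigma> i')) = 0" using iJ by (simp add: eqq_def G H)
    then show "e i i' = f (\<pi> i) (\<pi> i')" using mY i i' unfolding is_metric_def \<pi>_def by auto
  qed
  show ?thesis unfolding graph_eq_def G H using mn \<pi>p hv he by auto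
qed


lemma Min_TT:
  assumes "fst G \<le> N"
  shows "Min (TT N G H) \<in> TT N G H" "\<And>x. x \<in> TT N G H \<Longrightarrow> Min (TT N G H) \<le> x"
    "Min (TT N G H) \<ge> 0"
  using TT_fin[OF assms, of H] TT_nn by auto

lemma TT_obtain:
  assumes "x \<in> TT N G H" obtains \<sigma> J where "valid N G H \<sigma> J" "pc N G H \<sigma> J = x"
  using assms unfolding TT_def by blast

lemma ge_fst: "graph_eq G G' \<Longrightarrow> fst G = fst G'"
  unfolding graph_eq_def by (auto split: prod.splits)

lemma part1:
  assumes "graph_eq G G'"
  shows "gtt_dist p C dX dY y0 G H = gtt_dist p C dX dY y0 G' H"
proof -
  define N where "N = fst G + fst H"
  have "fst G \<le> N" "fst G' \<le> N" "fst H \<le> N" using ge_fst[OF assms] by (auto simp: N_def)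
  then show ?thesis using gtt_dist_TT[of G N H] gtt_dist_TT[of G' N H] TT_relabel[OF assms, of N H] by simp
qed

lemma part3: "gtt_dist p C dX dY y0 G H = gtt_dist p C dX dY y0 H G"
proof -
  define N where "N = fst G + fst H"
  have "fst G \<le> N" "fst H \<le> N" by (auto simp: N_def)
  then show ?thesis using gtt_dist_TT[of G N H] gtt_dist_TT[of H N G] TT_sym[of N G H] by simp
qed

lemma part2: "gtt_dist p C dX dY y0 G G = 0"
proof -
  obtain m v e where G: "G = (m,v,e)" by (cases G) auto
  have "valid m G G id {1..m}" "pc m G G id {1..m} = 0" using pc_self[of m m v e] G by auto
  then have "0 \<in> TT m G G" unfolding TT_def by force
  then have "Min (TT m G G) = 0" using Min_TT[where G=G and N=m and H=G] G by force
  then show ?thesis using gtt_dist_TT[of G m G] G by simp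
qed

lemma part4: "gtt_dist p C dX dY y0 G K \<le> gtt_dist p C dX dY y0 G H + gtt_dist p C dX dY y0 H K"
proof -
  define N where "N = fst G + fst H + fst K"
  have N: "fst G \<le> N" "fst H \<le> N" "fst K \<le> N" by (auto simp: N_def)
  obtain \<sigma>1 J1 where v1: "valid N G H \<sigma>1 J1" and a: "pc N G H \<sigma>1 J1 = Min (TT N G H)"
    using Min_TT(1)[OF N(1), of H] by (rule TT_obtain)
  obtain \<sigma>2 J2 where v2: "valid N H K \<sigma>2 J2" and b: "pc N H K \<sigma>2 J2 = Min (TT N H K)"
    using Min_TT(1)[OF N(2), of K] by (rule TT_obtain)
  from pc_tri[OF v1 v2] have vc: "valid N G K (\<sigma>2 \<circ> \<sigma>1) {s\<in>J1. \<sigma>1 s \<in> J2}"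
    and tri: "pc N G K (\<sigma>2 \<circ> \<sigma>1) {s\<in>J1. \<sigma>1 s \<in> J2} powr (1/p) \<le> pc N G H \<sigma>1 J1 powr (1/p) + pc N H K \<sigma>2 J2 powr (1/p)"
    by auto
  have "pc N G K (\<sigma>2 \<circ> \<sigma>1) {s\<in>J1. \<sigma>1 s \<in> J2} \<in> TT N G K" using vc unfolding TT_def by blast
  then have "Min (TT N G K) \<le> pc N G K (\<sigma>2 \<circ> \<sigma>1) {s\<in>J1. \<sigma>1 s \<in> J2}" using Min_TT(2)[OF N(1)] by blast
  then have "Min (TT N G K) powr (1/p) \<le> pc N G K (\<sigma>2 \<circ> \<sigma>1) {s\<in>J1. \<sigma>1 s \<in> J2} powr (1/p)"
    using Min_TT(3)[OF N(1), of K] p1 by (intro powr_mono2) auto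
  with tri a b show ?thesis using gtt_dist_TT N by simp
qed

lemma part5:
  assumes "is_metric dX" "is_metric dY"
  shows "gtt_dist p C dX dY y0 G H = 0 \<longleftrightarrow> graph_eq G H"
proof
  define N where "N = fst G + fst H"
  have N: "fst G \<le> N" "fst H \<le> N" by (auto simp: N_def)
  assume "gtt_dist p C dX dY y0 G H = 0"
  then have "Min (TT N G H) = 0" using gtt_dist_TT[OF N] by simp
  then obtain \<sigma> J where "valid N G H \<sigma> J" "pc N G H \<sigma> J = 0"
    using Min_TT(1)[OF N(1), of H] TT_obtain by metis
  then show "graph_eq G H" using pc_zero_eq[OF assms] N by blast
next
  assume "graph_eq G H"
  then show "gtt_dist p C dX dY y0 G H = 0" using part1[of G H H] part2[of H] by simp
qed

end

theorem mainTheorem2: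
  fixes p C :: real and dX :: "'x \<Rightarrow> 'x \<Rightarrow> real" and dY :: "'y \<Rightarrow> 'y \<Rightarrow> real" and y0 :: 'y
  assumes "p \<ge> 1" and "C > 0" and "pseudometric dX" and "pseudometric dY"
  shows "(\<forall>G G' H. is_agraph y0 G \<and> is_agraph y0 G' \<and> is_agraph y0 H \<and> graph_eq G G' \<longrightarrow>
            gtt_dist p C dX dY y0 G H = gtt_dist p C dX dY y0 G' H \<and>
            gtt_dist p C dX dY y0 H G = gtt_dist p C dX dY y0 H G')
       \<and> (\<forall>G. is_agraph y0 G \<longrightarrow> gtt_dist p C dX dY y0 G G = 0)
       \<and> (\<forall>G H. is_agraph y0 G \<and> is_agraph y0 H \<longrightarrow>
            gtt_dist p C dX dY y0 G H = gtt_dist p C dX dY y0 H G)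
       \<and> (\<forall>G H K. is_agraph y0 G \<and> is_agraph y0 H \<and> is_agraph y0 K \<longrightarrow>
            gtt_dist p C dX dY y0 G K \<le> gtt_dist p C dX dY y0 G H + gtt_dist p C dX dY y0 H K)
       \<and> (is_metric dX \<and> is_metric dY \<longrightarrow>
            (\<forall>G H. is_agraph y0 G \<and> is_agraph y0 H \<longrightarrow>
               (gtt_dist p C dX dY y0 G H = 0 \<longleftrightarrow> graph_eq G H)))"
proof -
  interpret gtt p C dX dY y0 using assms by unfold_locales
  show ?thesis
  proof (intro conjI allI impI)
    fix G G' H :: "('x, 'y) agraph" assume a: "is_agraph y0 G \<and> is_agraph y0 G' \<and> is_agraph y0 H \<and> graph_eq G G'"
    then show "gtt_dist p C dX dY y0 G H = gtt_dist p C dX dY y0 G' H" using part1 by blast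
    show "gtt_dist p C dX dY y0 H G = gtt_dist p C dX dY y0 H G'"
      using part1[of G G' H] a part3[of H G] part3[of H G'] by simp
  next
    fix G :: "('x, 'y) agraph" show "gtt_dist p C dX dY y0 G G = 0" by (rule part2)
  next
    fix G H :: "('x, 'y) agraph" show "gtt_dist p C dX dY y0 G H = gtt_dist p C dX dY y0 H G" by (rule part3)
  next
    fix G H K :: "('x, 'y) agraph" show "gtt_dist p C dX dY y0 G K \<le> gtt_dist p C dX dY y0 G H + gtt_dist p C dX dY y0 H K"
      by (rule part4)
  next
    fix G H :: "('x, 'y) agraph" assume "is_metric dX \<and> is_metric dY"
    then show "gtt_dist p C dX dY y0 G H = 0 \<longleftrightarrow> graph_eq G H" using part5 by blast
  qed
qed

end
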